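(* Let $\mathbb X=\langle X,\rho\rangle$ and $\mathbb Y=\langle Y,\sigma\rangle$ be structures of size $\omega_1$ with $\rho,\sigma$ equivalence relations, each having countably infinitely many singleton classes and exactly one class of size $n$ for each $n\ge2$, such that the only infinite class of $\mathbb X$ is a single class $X'$ with $|X'|=\omega_1$, and the infinite classes of $\mathbb Y$ are exactly two classes $Y',Y''$ with $|Y'|=|Y''|=\omega_1$. Then $\mathbb X\equiv\mathbb Y$, $\mathbb X\equiv_{\mathcal P_{\infty\omega}}\mathbb Y$, $\mathbb X\not\sim_c\mathbb Y$, and $\mathbb X\not\equiv_{\infty\omega}\mathbb Y$.
   Context: The language has one binary relation symbol $R$. A condensation from $\langle X,\rho\rangle$ onto $\langle Y,\sigma\rangle$ is a bijection $F:X\to Y$ with $x\,\rho\,x'\Rightarrow F(x)\,\sigma\,F(x')$; $\mathbb X\sim_c\mathbb Y$ means condensations exist in both directions. $\equiv$ is first order elementary equivalence, $\equiv_{\infty\omega}$ equivalence for all $L_{\infty\omega}$-sentences. $\mathcal P_0$ consists of all atomic formulas ($v_\alpha=v_\beta$, $R(v_\alpha,v_\beta)$) and all $\neg\,v_\alpha=v_\beta$; $\mathcal P_{\infty\omega}$ is the closure of $\mathcal P_0$ under $\forall v$, $\exists v$ and conjunctions and disjunctions of arbitrary sets of formulas (no negation); $\equiv_{\mathcal P_{\infty\omega}}$ means satisfying the same $\mathcal P_{\infty\omega}$-sentences. *)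

theory Defs
  imports Main "HOL-Library.Countable_Set"
begin

text \<open>A structure in the language with one binary relation symbol R is a pair
  (X, rho) with carrier X :: 'a set and rho :: ('a * 'a) set, rho a relation on X.\<close>

definition has_size_omega1 :: "'a set \<Rightarrow> bool" where
  "has_size_omega1 A \<longleftrightarrow> (card_of A, cardSuc natLeq) \<in> ordIso"

definition condensation ::
  "'a set \<Rightarrow> ('a \<times> 'a) set \<Rightarrow> 'b set \<Rightarrow> ('b \<times> 'b) set \<Rightarrow> ('a \<Rightarrow> 'b) \<Rightarrow> bool" where
  "condensation X rho Y sigma F \<longleftrightarrow>
     bij_betw F X Y \<and>
     (\<forall>x\<in>X. \<forall>x'\<in>X. (x, x') \<in> rho \<longrightarrow> (F x, F x') \<in> sigma)"

definition cond_equiv ::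
  "'a set \<Rightarrow> ('a \<times> 'a) set \<Rightarrow> 'b set \<Rightarrow> ('b \<times> 'b) set \<Rightarrow> bool" where
  "cond_equiv X rho Y sigma \<longleftrightarrow>
     (\<exists>F. condensation X rho Y sigma F) \<and> (\<exists>G. condensation Y sigma X rho G)"

datatype fo =
    FEq nat nat
  | FRel nat nat
  | FNeg fo
  | FAnd fo fo
  | FOr fo fo
  | FEx nat fo
  | FAll nat fo

primrec fo_fv :: "fo \<Rightarrow> nat set" where
  "fo_fv (FEq i j) = {i, j}"
| "fo_fv (FRel i j) = {i, j}"
| "fo_fv (FNeg p) = fo_fv p"
| "fo_fv (FAnd p q) = fo_fv p \<union> fo_fv q"
| "fo_fv (FOr p q) = fo_fv p \<union> fo_fv q"
| "fo_fv (FEx v p) = fo_fv p - {v}"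
| "fo_fv (FAll v p) = fo_fv p - {v}"

primrec fo_sat :: "'a set \<Rightarrow> ('a \<times> 'a) set \<Rightarrow> fo \<Rightarrow> (nat \<Rightarrow> 'a) \<Rightarrow> bool" where
  "fo_sat X rho (FEq i j) s = (s i = s j)"
| "fo_sat X rho (FRel i j) s = ((s i, s j) \<in> rho)"
| "fo_sat X rho (FNeg p) s = (\<not> fo_sat X rho p s)"
| "fo_sat X rho (FAnd p q) s = (fo_sat X rho p s \<and> fo_sat X rho q s)"
| "fo_sat X rho (FOr p q) s = (fo_sat X rho p s \<or> fo_sat X rho q s)"
| "fo_sat X rho (FEx v p) s = (\<exists>a\<in>X. fo_sat X rho p (s(v := a)))"
| "fo_sat X rho (FAll v p) s = (\<forall>a\<in>X. fo_sat X rho p (s(v := a)))"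

definition fo_models :: "'a set \<Rightarrow> ('a \<times> 'a) set \<Rightarrow> fo \<Rightarrow> bool" where
  "fo_models X rho p \<longleftrightarrow> (\<forall>s. range s \<subseteq> X \<longrightarrow> fo_sat X rho p s)"

definition elem_equiv ::
  "'a set \<Rightarrow> ('a \<times> 'a) set \<Rightarrow> 'b set \<Rightarrow> ('b \<times> 'b) set \<Rightarrow> bool" where
  "elem_equiv X rho Y sigma \<longleftrightarrow>
     (\<forall>p. fo_fv p = {} \<longrightarrow> (fo_models X rho p \<longleftrightarrow> fo_models Y sigma p))"

text \<open>Formulas whose conjunctions/disjunctions range over sets of formulas of the form
  f ` S with S :: 'i set. The index type 'i bounds the size of the conjunctions;
  L_{\<infinity>\<omega>} is the union over all index types.\<close>

datatype 'i inf =
    IEq nat nat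
  | IRel nat nat
  | INeg "'i inf"
  | IConj "'i set" "'i \<Rightarrow> 'i inf"
  | IDisj "'i set" "'i \<Rightarrow> 'i inf"
  | IEx nat "'i inf"
  | IAll nat "'i inf"

primrec inf_fv :: "'i inf \<Rightarrow> nat set" where
  "inf_fv (IEq i j) = {i, j}"
| "inf_fv (IRel i j) = {i, j}"
| "inf_fv (INeg p) = inf_fv p"
| "inf_fv (IConj S f) = (\<Union>k\<in>S. inf_fv (f k))"
| "inf_fv (IDisj S f) = (\<Union>k\<in>S. inf_fv (f k))"
| "inf_fv (IEx v p) = inf_fv p - {v}"
| "inf_fv (IAll v p) = inf_fv p - {v}"

primrec inf_sat :: "'a set \<Rightarrow> ('a \<times> 'a) set \<Rightarrow> 'i inf \<Rightarrow> (nat \<Rightarrow> 'a) \<Rightarrow> bool" where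
  "inf_sat X rho (IEq i j) s = (s i = s j)"
| "inf_sat X rho (IRel i j) s = ((s i, s j) \<in> rho)"
| "inf_sat X rho (INeg p) s = (\<not> inf_sat X rho p s)"
| "inf_sat X rho (IConj S f) s = (\<forall>k\<in>S. inf_sat X rho (f k) s)"
| "inf_sat X rho (IDisj S f) s = (\<exists>k\<in>S. inf_sat X rho (f k) s)"
| "inf_sat X rho (IEx v p) s = (\<exists>a\<in>X. inf_sat X rho p (s(v := a)))"
| "inf_sat X rho (IAll v p) s = (\<forall>a\<in>X. inf_sat X rho p (s(v := a)))"

definition inf_models :: "'a set \<Rightarrow> ('a \<times> 'a) set \<Rightarrow> 'i inf \<Rightarrow> bool" where
  "inf_models X rho p \<longleftrightarrow> (\<forall>s. range s \<subseteq> X \<longrightarrow> inf_sat X rho p s)"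

primrec positive :: "'i inf \<Rightarrow> bool" where
  "positive (IEq i j) = True"
| "positive (IRel i j) = True"
| "positive (INeg p) = (case p of IEq i j \<Rightarrow> True | _ \<Rightarrow> False)"
| "positive (IConj S f) = (\<forall>k\<in>S. positive (f k))"
| "positive (IDisj S f) = (\<forall>k\<in>S. positive (f k))"
| "positive (IEx v p) = positive p"
| "positive (IAll v p) = positive p"

definition inf_equiv ::
  "'i itself \<Rightarrow> 'a set \<Rightarrow> ('a \<times> 'a) set \<Rightarrow> 'b set \<Rightarrow> ('b \<times> 'b) set \<Rightarrow> bool" where
  "inf_equiv _ X rho Y sigma \<longleftrightarrow>
     (\<forall>p :: 'i inf. inf_fv p = {} \<longrightarrow> (inf_models X rho p \<longleftrightarrow> inf_models Y sigma p))"

definition pos_equiv ::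
  "'i itself \<Rightarrow> 'a set \<Rightarrow> ('a \<times> 'a) set \<Rightarrow> 'b set \<Rightarrow> ('b \<times> 'b) set \<Rightarrow> bool" where
  "pos_equiv _ X rho Y sigma \<longleftrightarrow>
     (\<forall>p :: 'i inf. inf_fv p = {} \<longrightarrow> positive p \<longrightarrow>
        (inf_models X rho p \<longleftrightarrow> inf_models Y sigma p))"

end

theory Submission imports Defs "HOL-Library.Countable_Set_Type" begin
unbundle cardinal_syntax

lemma omega1_uncountable: "has_size_omega1 A \<Longrightarrow> \<not> countable A"
proof
  assume h: "has_size_omega1 A" and c: "countable A"
  have "|A| \<le>o natLeq" using c countable_card_le_natLeq by blast
  moreover have "natLeq <o cardSuc natLeq" by (simp add: cardSuc_greater natLeq_Card_order)
  moreover have "cardSuc natLeq \<le>o |A|" using h unfolding has_size_omega1_def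
    using ordIso_iff_ordLeq ordIso_symmetric by blast
  ultimately show False using not_ordLess_ordLeq ordLeq_transitive by blast
qed

lemma card_img_eq:
  assumes "\<forall>i\<in>U. \<forall>j\<in>U. (s i = s j) = (t i = t j)"
  shows "card (s ` U) = card (t ` U)"
proof -
  let ?P = "(\<lambda>j. (s j, t j)) ` U"
  have "inj_on fst ?P" using assms by (auto simp: inj_on_def)
  hence 1: "card (fst ` ?P) = card ?P" by (rule card_image)
  have "inj_on snd ?P" using assms by (auto simp: inj_on_def)
  hence 2: "card (snd ` ?P) = card ?P" by (rule card_image)
  have "fst ` ?P = s ` U" "snd ` ?P = t ` U" by (auto simp: image_image)
  with 1 2 show ?thesis by simp
qed

definition singl :: "'a set \<Rightarrow> ('a \<times> 'a) set \<Rightarrow> 'a set" where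
  "singl A r = {a\<in>A. r``{a} = {a}}"

definition pgood where
  "pgood rho sigma S Y' V s t \<longleftrightarrow> (\<forall>i\<in>V. \<forall>j\<in>V. (s i = s j \<longleftrightarrow> t i = t j) \<and>
     ((s i, s j) \<in> rho \<longrightarrow> (t i, t j) \<in> sigma) \<and> (s i \<notin> S \<longrightarrow> t i \<in> Y'))"

lemma fresh_inf: "infinite A \<Longrightarrow> finite B \<Longrightarrow> \<exists>a\<in>A. a \<notin> B"
  by (metis finite_subset subsetI)

lemma pgood_mono: "pgood rho sigma S Y' V s t \<Longrightarrow> W \<subseteq> V \<Longrightarrow> pgood rho sigma S Y' W s t"
  unfolding pgood_def by blast

lemma pgood_insert:
  assumes "pgood rho sigma S Y' W s t" "v \<notin> W"
    "\<forall>j\<in>W. (a = s j \<longleftrightarrow> b = t j) \<and> ((a, s j)\<in>rho \<longrightarrow> (b,t j)\<in>sigma) \<and> ((s j, a)\<in>rho \<longrightarrow> (t j, b)\<in>sigma)"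
    "(a,a)\<in>rho \<longrightarrow> (b,b)\<in>sigma" "a\<notin>S \<longrightarrow> b\<in>Y'"
  shows "pgood rho sigma S Y' (insert v W) (s(v:=a)) (t(v:=b))"
  unfolding pgood_def
proof (intro ballI)
  fix i j assume i: "i \<in> insert v W" and j: "j \<in> insert v W"
  have vs: "v \<notin> W" by fact
  note A = assms(1)[unfolded pgood_def] assms(3)
  show "((s(v := a)) i = (s(v := a)) j) = ((t(v := b)) i = (t(v := b)) j) \<and>
         (((s(v := a)) i, (s(v := a)) j) \<in> rho \<longrightarrow> ((t(v := b)) i, (t(v := b)) j) \<in> sigma) \<and>
         ((s(v := a)) i \<notin> S \<longrightarrow> (t(v := b)) i \<in> Y')"
  proof (cases "i = v")
    case True
    show ?thesis
    proof (cases "j = v")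
      case True
      with \<open>i = v\<close> assms(4,5) show ?thesis by simp
    next
      case False
      hence "j \<in> W" using j by simp
      with \<open>i = v\<close> False A(2) assms(5) show ?thesis by simp
    qed
  next
    case False
    hence iW: "i \<in> W" using i by simp
    show ?thesis
    proof (cases "j = v")
      case True
      with iW False A show ?thesis by auto
    next
      case False
      hence "j \<in> W" using j by simp
      with iW \<open>i \<noteq> v\<close> False A(1) show ?thesis by simp
    qed
  qed
qed

lemma pos_transfer:
  fixes p :: "'i inf"
  assumes eX: "equiv X rho" and eY: "equiv Y sigma"
    and S: "S = singl X rho" and infS: "infinite S"
    and Y'Y: "Y' \<subseteq> Y" and infY': "infinite Y'" and relY': "\<forall>y\<in>Y'. \<forall>y'\<in>Y'. (y, y') \<in> sigma"
  shows "positive p \<Longrightarrow> finite V \<Longrightarrow> inf_fv p \<subseteq> V \<Longrightarrow> range s \<subseteq> X \<Longrightarrow> range t \<subseteq> Y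
    \<Longrightarrow> pgood rho sigma S Y' V s t \<Longrightarrow> inf_sat X rho p s \<Longrightarrow> inf_sat Y sigma p t"
proof (induction p arbitrary: V s t)
  case (IEq i j)
  then show ?case by (auto simp: pgood_def)
next
  case (IRel i j)
  then show ?case by (auto simp: pgood_def)
next
  case (INeg p)
  then obtain i j where p: "p = IEq i j" by (cases p) auto
  with INeg show ?case by (auto simp: pgood_def)
next
  case (IConj I f)
  then show ?case by (fastforce)
next
  case (IDisj I f)
  then show ?case by (fastforce)
next
  case (IEx v p)
  let ?W = "V - {v}"
  from IEx.prems obtain a where aX: "a \<in> X" and sa: "inf_sat X rho p (s(v := a))" by auto
  have fW: "finite ?W" using IEx.prems by auto
  have symr: "\<And>x y. (x,y)\<in>rho \<Longrightarrow> (y,x)\<in>rho" using eX unfolding equiv_def sym_def by blast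
  have refls: "\<And>y. y \<in> Y \<Longrightarrow> (y,y)\<in>sigma" using eY unfolding equiv_def refl_on_def by blast
  have good: "pgood rho sigma S Y' ?W s t" using pgood_mono[OF IEx.prems(6)] by blast
  have gW: "\<forall>i\<in>?W. \<forall>j\<in>?W. (s i = s j \<longleftrightarrow> t i = t j) \<and>
     ((s i, s j) \<in> rho \<longrightarrow> (t i, t j) \<in> sigma) \<and> (s i \<notin> S \<longrightarrow> t i \<in> Y')"
    using good unfolding pgood_def by blast
  have vW: "v \<notin> ?W" by simp
  have "\<exists>b\<in>Y. pgood rho sigma S Y' (insert v ?W) (s(v:=a)) (t(v:=b))"
  proof (cases "a \<in> s ` ?W")
    case True
    then obtain i where i: "i \<in> ?W" "a = s i" by auto
    have tY: "t i \<in> Y" using IEx.prems by auto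
    show ?thesis
      apply (rule bexI[OF _ tY], rule pgood_insert[OF good vW])
      using gW i by auto
  next
    case False
    show ?thesis
    proof (cases "a \<in> S")
      case True
      have "infinite Y" using infY' Y'Y finite_subset by blast
      then obtain b where b: "b \<in> Y" "b \<notin> t ` ?W" using fresh_inf[of Y "t ` ?W"] fW by blast
      have sing: "\<And>x. (a,x)\<in>rho \<Longrightarrow> x = a" using True S unfolding singl_def by auto
      show ?thesis
        apply (rule bexI[OF _ b(1)], rule pgood_insert[OF good vW])
        using b False sing symr refls True by force+
    next
      case aS: False
      obtain b where b: "b \<in> Y'" "b \<notin> t ` ?W" using fresh_inf[of Y' "t ` ?W"] fW infY' by blast
      have ns: "\<And>x. x \<in> X \<Longrightarrow> (a,x)\<in>rho \<Longrightarrow> x \<notin> S"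
      proof
        fix x assume x: "x \<in> X" "(a,x)\<in>rho" "x \<in> S"
        hence "rho``{x} = {x}" using S unfolding singl_def by auto
        moreover have "a \<in> rho``{x}" using x symr by auto
        ultimately have "a = x" by auto
        with x aS show False by simp
      qed
      have sX: "\<And>j. s j \<in> X" using IEx.prems by auto
      have bY: "b \<in> Y" using b Y'Y by auto
      have A: "\<forall>j\<in>?W. (a = s j \<longleftrightarrow> b = t j) \<and> ((a, s j)\<in>rho \<longrightarrow> (b,t j)\<in>sigma) \<and> ((s j, a)\<in>rho \<longrightarrow> (t j, b)\<in>sigma)"
      proof
        fix j assume j: "j \<in> ?W"
        have 1: "(a = s j \<longleftrightarrow> b = t j)" using j False b by auto
        have 2: "(a, s j)\<in>rho \<longrightarrow> (b,t j)\<in>sigma"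
        proof
          assume "(a, s j) \<in> rho"
          hence "s j \<notin> S" using ns sX by blast
          hence "t j \<in> Y'" using gW j by blast
          thus "(b, t j) \<in> sigma" using relY' b by blast
        qed
        have 3: "(s j, a)\<in>rho \<longrightarrow> (t j, b)\<in>sigma"
        proof
          assume "(s j, a) \<in> rho"
          hence "s j \<notin> S" using ns sX symr by blast
          hence "t j \<in> Y'" using gW j by blast
          thus "(t j, b) \<in> sigma" using relY' b by blast
        qed
        show "(a = s j \<longleftrightarrow> b = t j) \<and> ((a, s j)\<in>rho \<longrightarrow> (b,t j)\<in>sigma) \<and> ((s j, a)\<in>rho \<longrightarrow> (t j, b)\<in>sigma)"
          using 1 2 3 by blast
      qed
      show ?thesis
        apply (rule bexI[OF _ bY], rule pgood_insert[OF good vW A])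
        using b relY' aS by auto
    qed
  qed
  then obtain b where bY: "b \<in> Y" and gb: "pgood rho sigma S Y' (insert v ?W) (s(v:=a)) (t(v:=b))" by blast
  have "inf_sat Y sigma p (t(v:=b))"
    apply (rule IEx.IH[OF _ _ _ _ _ gb sa])
    using IEx.prems aX bY by auto
  then show ?case using bY by auto
next
  case (IAll v p)
  let ?W = "V - {v}"
  have fW: "finite ?W" using IAll.prems by auto
  have good: "pgood rho sigma S Y' ?W s t" using pgood_mono[OF IAll.prems(6)] by blast
  have gW: "\<forall>i\<in>?W. \<forall>j\<in>?W. (s i = s j \<longleftrightarrow> t i = t j) \<and>
     ((s i, s j) \<in> rho \<longrightarrow> (t i, t j) \<in> sigma) \<and> (s i \<notin> S \<longrightarrow> t i \<in> Y')"
    using good unfolding pgood_def by blast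
  have vW: "v \<notin> ?W" by simp
  have symr: "\<And>x y. (x,y)\<in>rho \<Longrightarrow> (y,x)\<in>rho" using eX unfolding equiv_def sym_def by blast
  have refls: "\<And>y. y \<in> Y \<Longrightarrow> (y,y)\<in>sigma" using eY unfolding equiv_def refl_on_def by blast
  show ?case
  proof (simp, intro ballI)
    fix b assume bY: "b \<in> Y"
    have "\<exists>a\<in>X. pgood rho sigma S Y' (insert v ?W) (s(v:=a)) (t(v:=b))"
    proof (cases "b \<in> t ` ?W")
      case True
      then obtain i where i: "i \<in> ?W" "b = t i" by auto
      have sX: "s i \<in> X" using IAll.prems by auto
      show ?thesis
        apply (rule bexI[OF _ sX], rule pgood_insert[OF good vW])
        using gW i by auto
    next
      case False
      obtain a where a: "a \<in> S" "a \<notin> s ` ?W" using fresh_inf[of S "s ` ?W"] fW infS by blast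
      have sing: "\<And>x. (a,x)\<in>rho \<Longrightarrow> x = a" using a S unfolding singl_def by auto
      have aX: "a \<in> X" using a S unfolding singl_def by auto
      show ?thesis
        apply (rule bexI[OF _ aX], rule pgood_insert[OF good vW])
        using a False sing symr refls bY by force+
    qed
    then obtain a where aX: "a \<in> X" and gb: "pgood rho sigma S Y' (insert v ?W) (s(v:=a)) (t(v:=b))" by blast
    have sa: "inf_sat X rho p (s(v := a))" using IAll.prems aX by auto
    show "inf_sat Y sigma p (t(v:=b))"
      apply (rule IAll.IH[OF _ _ _ _ _ gb sa])
      using IAll.prems aX bY by auto
  qed
qed

definition nice :: "'a set \<Rightarrow> ('a \<times> 'a) set \<Rightarrow> bool" where
  "nice A r \<longleftrightarrow> equiv A r \<and> infinite (singl A r) \<and> (\<forall>m\<ge>2. \<exists>!C. C \<in> A // r \<and> finite C \<and> card C = m)"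

definition sz :: "('a \<times> 'a) set \<Rightarrow> 'a \<Rightarrow> nat \<Rightarrow> nat" where
  "sz r x N = (if finite (r``{x}) then min (card (r``{x})) N else N)"

definition agree where
  "agree rho sigma N V s t \<longleftrightarrow> (\<forall>i\<in>V. \<forall>j\<in>V. (s i = s j \<longleftrightarrow> t i = t j) \<and>
     ((s i, s j) \<in> rho \<longleftrightarrow> (t i, t j) \<in> sigma) \<and> sz rho (s i) N = sz sigma (t i) N)"

lemma agree_sym: "agree rho sigma N V s t \<Longrightarrow> agree sigma rho N V t s"
  unfolding agree_def by simp

lemma agree_mono: "agree rho sigma N V s t \<Longrightarrow> W \<subseteq> V \<Longrightarrow> agree rho sigma N W s t"
  unfolding agree_def by blast

lemma agree_insert:
  assumes "agree rho sigma N W s t" "v \<notin> W"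
    "\<forall>j\<in>W. (a = s j \<longleftrightarrow> b = t j) \<and> ((a, s j)\<in>rho \<longleftrightarrow> (b,t j)\<in>sigma) \<and> ((s j, a)\<in>rho \<longleftrightarrow> (t j, b)\<in>sigma)"
    "(a,a)\<in>rho \<longleftrightarrow> (b,b)\<in>sigma" "sz rho a N = sz sigma b N"
  shows "agree rho sigma N (insert v W) (s(v:=a)) (t(v:=b))"
  unfolding agree_def
proof (intro ballI)
  fix i j assume i: "i \<in> insert v W" and j: "j \<in> insert v W"
  have vs: "v \<notin> W" by fact
  note A = assms(1)[unfolded agree_def] assms(3)
  show "((s(v := a)) i = (s(v := a)) j) = ((t(v := b)) i = (t(v := b)) j) \<and>
         (((s(v := a)) i, (s(v := a)) j) \<in> rho \<longleftrightarrow> ((t(v := b)) i, (t(v := b)) j) \<in> sigma) \<and>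
         sz rho ((s(v := a)) i) N = sz sigma ((t(v := b)) i) N"
  proof (cases "i = v")
    case True
    show ?thesis
    proof (cases "j = v")
      case True
      with \<open>i = v\<close> assms(4,5) show ?thesis by simp
    next
      case False
      hence "j \<in> W" using j by simp
      with \<open>i = v\<close> False A(2) assms(5) show ?thesis by simp
    qed
  next
    case False
    hence iW: "i \<in> W" using i by simp
    show ?thesis
    proof (cases "j = v")
      case True
      with iW False A show ?thesis by auto
    next
      case False
      hence "j \<in> W" using j by simp
      with iW \<open>i \<noteq> v\<close> False A(1) show ?thesis by simp
    qed
  qed
qed

lemma big_class:
  assumes n: "nice A r" and fU: "finite U"
  shows "\<exists>b\<in>A. finite (r``{b}) \<and> N \<le> card (r``{b}) \<and> (\<forall>u\<in>U. (b,u) \<notin> r)"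
proof -
  have eq: "equiv A r" using n unfolding nice_def by blast
  let ?Big = "{C\<in>A//r. finite C \<and> N \<le> card C}"
  have "{max N 2..} \<subseteq> card ` ?Big"
  proof
    fix m assume "m \<in> {max N 2..}"
    hence m: "m \<ge> 2" "m \<ge> N" by auto
    have "\<exists>!C. C \<in> A // r \<and> finite C \<and> card C = m" using n m(1) unfolding nice_def by blast
    then obtain C where "C \<in> A // r" "finite C" "card C = m" by (meson ex1E)
    thus "m \<in> card ` ?Big" using m by (intro image_eqI[where x=C]) auto
  qed
  hence "infinite ?Big"
    using infinite_Ici[of "max N 2"] finite_subset[of "{max N 2..}" "card ` ?Big"] finite_imageI[of ?Big card] by blast
  then have "\<exists>C\<in>?Big. C \<notin> (\<lambda>u. r``{u}) ` U" by (rule fresh_inf[OF _ finite_imageI[OF fU]])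
  then obtain C where C: "C \<in> ?Big" "C \<notin> (\<lambda>u. r``{u}) ` U" by (rule bexE)
  from C(1) have "C \<in> A // r" by simp
  then obtain b where b: "b \<in> A" "C = r``{b}" by (rule quotientE)
  have "\<forall>u\<in>U. (b,u) \<notin> r"
  proof (intro ballI notI)
    fix u assume "u \<in> U" "(b,u) \<in> r"
    hence "r``{b} = r``{u}" using equiv_class_eq[OF eq] by blast
    thus False using C(2) b(2) \<open>u \<in> U\<close> by auto
  qed
  moreover have "finite (r``{b}) \<and> N \<le> card (r``{b})" using C(1) unfolding b(2) by simp
  ultimately show ?thesis using b(1) by blast
qed

lemma sz_class: "(x,y) \<in> r \<Longrightarrow> equiv A r \<Longrightarrow> sz r x N = sz r y N"
  unfolding sz_def using equiv_class_eq by metis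

lemma forth:
  assumes nX: "nice X rho" and nY: "nice Y sigma" and fW: "finite W"
    and sX: "range s \<subseteq> X" and tY: "range t \<subseteq> Y"
    and ag: "agree rho sigma N W s t" and cW: "card W < N" and aX: "a \<in> X" and vW: "v \<notin> W"
  shows "\<exists>b\<in>Y. agree rho sigma N (insert v W) (s(v:=a)) (t(v:=b))"
proof -
  have eX: "equiv X rho" using nX unfolding nice_def by blast
  have eY: "equiv Y sigma" using nY unfolding nice_def by blast
  have symr: "\<And>x y. (x,y)\<in>rho \<Longrightarrow> (y,x)\<in>rho" using eX unfolding equiv_def sym_def by blast
  have transr: "\<And>x y z. (x,y)\<in>rho \<Longrightarrow> (y,z)\<in>rho \<Longrightarrow> (x,z)\<in>rho" using eX unfolding equiv_def trans_def by blast
  have reflr: "\<And>y. y \<in> X \<Longrightarrow> (y,y)\<in>rho" using eX unfolding equiv_def refl_on_def by blast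
  have syms: "\<And>x y. (x,y)\<in>sigma \<Longrightarrow> (y,x)\<in>sigma" using eY unfolding equiv_def sym_def by blast
  have transs: "\<And>x y z. (x,y)\<in>sigma \<Longrightarrow> (y,z)\<in>sigma \<Longrightarrow> (x,z)\<in>sigma" using eY unfolding equiv_def trans_def by blast
  have refls: "\<And>y. y \<in> Y \<Longrightarrow> (y,y)\<in>sigma" using eY unfolding equiv_def refl_on_def by blast
  have sXj: "\<And>j. s j \<in> X" using sX by auto
  have tYj: "\<And>j. t j \<in> Y" using tY by auto
  have agW: "\<And>i j. i \<in> W \<Longrightarrow> j \<in> W \<Longrightarrow> (s i = s j \<longleftrightarrow> t i = t j) \<and>
     ((s i, s j) \<in> rho \<longleftrightarrow> (t i, t j) \<in> sigma) \<and> sz rho (s i) N = sz sigma (t i) N"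
    using ag unfolding agree_def by blast
  have "\<exists>b\<in>Y. (\<forall>j\<in>W. (a = s j \<longleftrightarrow> b = t j) \<and> ((a, s j)\<in>rho \<longleftrightarrow> (b,t j)\<in>sigma) \<and> ((s j, a)\<in>rho \<longleftrightarrow> (t j, b)\<in>sigma))
     \<and> sz rho a N = sz sigma b N"
  proof (cases "a \<in> s ` W")
    case True
    then obtain i where i: "i \<in> W" "a = s i" by auto
    show ?thesis
    proof (rule bexI[OF _ tYj[of i]], rule conjI, rule ballI)
      fix j assume j: "j \<in> W"
      show "(a = s j \<longleftrightarrow> t i = t j) \<and> ((a, s j)\<in>rho \<longleftrightarrow> (t i,t j)\<in>sigma) \<and> ((s j, a)\<in>rho \<longleftrightarrow> (t j, t i)\<in>sigma)"
        using agW[OF i(1) j] agW[OF j i(1)] i(2) by simp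
    next
      show "sz rho a N = sz sigma (t i) N" using agW[OF i(1) i(1)] i(2) by simp
    qed
  next
    case anew: False
    show ?thesis
    proof (cases "\<exists>i\<in>W. (a, s i) \<in> rho")
      case True
      then obtain i where i: "i \<in> W" "(a, s i) \<in> rho" by blast
      let ?C = "rho``{s i}" and ?C' = "sigma``{t i}"
      let ?U = "{j\<in>W. (s i, s j) \<in> rho}"
      have aC: "a \<in> ?C" using i symr by blast
      have sUC: "s ` ?U \<subseteq> ?C" by blast
      have anU: "a \<notin> s ` ?U" using anew by blast
      have fU: "finite ?U" using fW by simp
      have tUC: "t ` ?U \<subseteq> ?C'"
      proof
        fix y assume "y \<in> t ` ?U"
        then obtain j where "j \<in> W" "(s i, s j) \<in> rho" "y = t j" by blast
        thus "y \<in> ?C'" using agW[OF i(1)] by blast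
      qed
      have cardU: "card (s ` ?U) = card (t ` ?U)"
        by (rule card_img_eq) (use agW in blast)
      have szi: "sz rho (s i) N = sz sigma (t i) N" using agW[OF i(1) i(1)] by simp
      have "\<exists>b\<in>?C'. b \<notin> t ` ?U"
      proof (cases "finite ?C \<and> card ?C < N")
        case True
        hence szC: "sz rho (s i) N = card ?C" unfolding sz_def by simp
        have C'fin: "finite ?C' \<and> card ?C' = card ?C"
        proof (cases "finite ?C'")
          case True
          then show ?thesis using szi szC \<open>finite ?C \<and> card ?C < N\<close> unfolding sz_def by (simp add: min_def split: if_splits)
        next
          case False
          then show ?thesis using szi szC \<open>finite ?C \<and> card ?C < N\<close> unfolding sz_def by simp
        qed
        have "s ` ?U \<subset> ?C" using sUC aC anU by blast
        hence "card (s ` ?U) < card ?C" using True psubset_card_mono by blast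
        hence "card (t ` ?U) < card ?C'" using cardU C'fin by simp
        hence "\<not> ?C' \<subseteq> t ` ?U" using card_mono[OF finite_imageI[OF fU], of ?C' t] by linarith
        thus ?thesis by blast
      next
        case False
        hence "sz rho (s i) N = N" unfolding sz_def by auto
        hence big: "infinite ?C' \<or> card ?C' \<ge> N" using szi unfolding sz_def by (auto split: if_splits)
        have "card (t ` ?U) \<le> card W"
          using card_image_le[OF fU, of t] card_mono[OF fW, of ?U] by simp
        hence lt: "card (t ` ?U) < N" using cW by simp
        show ?thesis
        proof (rule ccontr)
          assume "\<not> ?thesis"
          hence sub: "?C' \<subseteq> t ` ?U" by blast
          hence "finite ?C'" using finite_subset finite_imageI[OF fU] by blast
          moreover have "finite ?C' \<Longrightarrow> card ?C' \<le> card (t ` ?U)" using card_mono[OF finite_imageI[OF fU] sub] by simp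
          ultimately show False using big lt by simp
        qed
      qed
      then obtain b where b: "b \<in> ?C'" "b \<notin> t ` ?U" by blast
      have tib: "(t i, b) \<in> sigma" using b by simp
      have bY: "b \<in> Y" using tib eY unfolding equiv_def refl_on_def by blast
      show ?thesis
      proof (rule bexI[OF _ bY], rule conjI, rule ballI)
        fix j assume j: "j \<in> W"
        have r1: "(a, s j)\<in>rho \<longleftrightarrow> (s i, s j) \<in> rho" using i(2) symr transr by blast
        have r2: "(b, t j)\<in>sigma \<longleftrightarrow> (t i, t j) \<in> sigma" using tib syms transs by blast
        have r3: "(s i, s j) \<in> rho \<longleftrightarrow> (t i, t j) \<in> sigma" using agW[OF i(1) j] by simp
        have e1: "a \<noteq> s j" using anew j by blast
        have e2: "b \<noteq> t j"
        proof
          assume "b = t j"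
          hence "(t i, t j) \<in> sigma" using tib by simp
          hence "j \<in> ?U" using r3 j by simp
          thus False using b(2) \<open>b = t j\<close> by blast
        qed
        show "(a = s j \<longleftrightarrow> b = t j) \<and> ((a, s j)\<in>rho \<longleftrightarrow> (b,t j)\<in>sigma) \<and> ((s j, a)\<in>rho \<longleftrightarrow> (t j, b)\<in>sigma)"
          using r1 r2 r3 e1 e2 symr syms by blast
      next
        have "sz rho a N = sz rho (s i) N" using sz_class[OF i(2) eX] .
        moreover have "sz sigma b N = sz sigma (t i) N" using sz_class[OF syms[OF tib] eY] .
        ultimately show "sz rho a N = sz sigma b N" using szi by simp
      qed
    next
      case False
      hence norel: "\<And>j. j \<in> W \<Longrightarrow> (a, s j) \<notin> rho" by blast
      have "\<exists>b\<in>Y. (\<forall>j\<in>W. (b, t j) \<notin> sigma) \<and> sz rho a N = sz sigma b N"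
      proof (cases "finite (rho``{a}) \<and> card (rho``{a}) < N")
        case False
        hence sza: "sz rho a N = N" unfolding sz_def by auto
        obtain b where b: "b \<in> Y" "finite (sigma``{b})" "N \<le> card (sigma``{b})" "\<forall>u\<in>t ` W. (b,u) \<notin> sigma"
          using big_class[OF nY finite_imageI[OF fW]] by blast
        have "sz sigma b N = N" using b unfolding sz_def by simp
        thus ?thesis using b sza by auto
      next
        case True
        let ?m = "card (rho``{a})"
        have sza: "sz rho a N = ?m" using True unfolding sz_def by simp
        have "a \<in> rho``{a}" using reflr aX by blast
        hence m1: "?m \<ge> 1" using True card_0_eq[of "rho``{a}"] by fastforce
        show ?thesis
        proof (cases "?m = 1")
          case True
          have "infinite (singl Y sigma)" using nY unfolding nice_def by blast
          then obtain b where b: "b \<in> singl Y sigma" "b \<notin> t ` W" using fresh_inf[OF _ finite_imageI[OF fW]] by meson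
          have bcl: "sigma``{b} = {b}" "b \<in> Y" using b unfolding singl_def by auto
          have "sz sigma b N = 1" using bcl cW unfolding sz_def by simp
          moreover have "\<forall>j\<in>W. (b, t j) \<notin> sigma"
          proof (intro ballI notI)
            fix j assume "j \<in> W" "(b, t j) \<in> sigma"
            hence "t j = b" using bcl by blast
            thus False using b(2) \<open>j \<in> W\<close> by blast
          qed
          ultimately show ?thesis using bcl sza True by auto
        next
          case False
          hence m2: "?m \<ge> 2" using m1 by simp
          have "\<exists>!C. C \<in> Y // sigma \<and> finite C \<and> card C = ?m" using nY m2 unfolding nice_def by blast
          then obtain D where D: "D \<in> Y // sigma" "finite D" "card D = ?m" by (meson ex1E)
          from D(1) obtain b where b: "b \<in> Y" "D = sigma``{b}" by (rule quotientE)
          have szb: "sz sigma b N = ?m" using D b True unfolding sz_def by simp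
          have uX: "\<And>C C'. C \<in> X // rho \<Longrightarrow> finite C \<Longrightarrow> card C = ?m \<Longrightarrow> C' \<in> X // rho \<Longrightarrow> finite C' \<Longrightarrow> card C' = ?m \<Longrightarrow> C = C'"
          proof -
            fix C C' assume h: "C \<in> X // rho" "finite C" "card C = ?m" "C' \<in> X // rho" "finite C'" "card C' = ?m"
            have "\<exists>!C. C \<in> X // rho \<and> finite C \<and> card C = ?m" using nX m2 unfolding nice_def by blast
            thus "C = C'" using h by (elim ex1E) blast
          qed
          have "\<forall>j\<in>W. (b, t j) \<notin> sigma"
          proof (intro ballI notI)
            fix j assume j: "j \<in> W" and btj: "(b, t j) \<in> sigma"
            have "sz sigma (t j) N = ?m" using sz_class[OF btj eY] szb by simp
            hence szj: "sz rho (s j) N = ?m" using agW[OF j j] by simp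
            have fj: "finite (rho``{s j}) \<and> card (rho``{s j}) = ?m"
              using szj True unfolding sz_def by (auto simp: min_def split: if_splits)
            have "rho``{s j} = rho``{a}"
              using uX[OF quotientI[OF sXj[of j]] _ _ quotientI[OF aX]] fj True by blast
            hence "a \<in> rho``{s j}" using \<open>a \<in> rho``{a}\<close> by simp
            hence "(s j, a) \<in> rho" by simp
            thus False using norel[OF j] symr by blast
          qed
          thus ?thesis using b szb sza by auto
        qed
      qed
      then obtain b where bY: "b \<in> Y" and bn: "\<forall>j\<in>W. (b, t j) \<notin> sigma" and szab: "sz rho a N = sz sigma b N" by blast
      show ?thesis
      proof (rule bexI[OF _ bY], rule conjI, rule ballI)
        fix j assume j: "j \<in> W"
        have "b \<noteq> t j" using bn j refls[OF tYj[of j]] by blast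
        moreover have "a \<noteq> s j" using anew j by blast
        moreover have "(s j, a) \<notin> rho" using norel[OF j] symr by blast
        moreover have "(t j, b) \<notin> sigma" using bn j syms by blast
        ultimately show "(a = s j \<longleftrightarrow> b = t j) \<and> ((a, s j)\<in>rho \<longleftrightarrow> (b,t j)\<in>sigma) \<and> ((s j, a)\<in>rho \<longleftrightarrow> (t j, b)\<in>sigma)"
          using norel[OF j] bn j by blast
      qed (rule szab)
    qed
  qed
  then obtain b where bY: "b \<in> Y" and A: "\<forall>j\<in>W. (a = s j \<longleftrightarrow> b = t j) \<and> ((a, s j)\<in>rho \<longleftrightarrow> (b,t j)\<in>sigma) \<and> ((s j, a)\<in>rho \<longleftrightarrow> (t j, b)\<in>sigma)"
    and szab: "sz rho a N = sz sigma b N" by blast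
  have "(a,a)\<in>rho \<longleftrightarrow> (b,b)\<in>sigma" using reflr[OF aX] refls[OF bY] by simp
  thus ?thesis using agree_insert[OF ag vW A _ szab] bY by blast
qed

lemma upd_range: "range s \<subseteq> X \<Longrightarrow> a \<in> X \<Longrightarrow> range (s(v:=a)) \<subseteq> X"
  by auto

primrec qr :: "fo \<Rightarrow> nat" where
  "qr (FEq i j) = 0"
| "qr (FRel i j) = 0"
| "qr (FNeg p) = qr p"
| "qr (FAnd p q) = max (qr p) (qr q)"
| "qr (FOr p q) = max (qr p) (qr q)"
| "qr (FEx v p) = Suc (qr p)"
| "qr (FAll v p) = Suc (qr p)"

lemma fo_transfer:
  assumes nX: "nice X rho" and nY: "nice Y sigma"
  shows "finite V \<Longrightarrow> fo_fv p \<subseteq> V \<Longrightarrow> range s \<subseteq> X \<Longrightarrow> range t \<subseteq> Y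
    \<Longrightarrow> agree rho sigma N V s t \<Longrightarrow> qr p + card V \<le> N \<Longrightarrow> fo_sat X rho p s = fo_sat Y sigma p t"
proof (induction p arbitrary: V s t)
  case (FEq i j)
  then show ?case unfolding agree_def by auto
next
  case (FRel i j)
  then show ?case unfolding agree_def by auto
next
  case (FNeg p)
  then show ?case by simp
next
  case (FAnd p q)
  have "fo_sat X rho p s = fo_sat Y sigma p t" by (rule FAnd.IH(1)) (use FAnd.prems in auto)
  moreover have "fo_sat X rho q s = fo_sat Y sigma q t" by (rule FAnd.IH(2)) (use FAnd.prems in auto)
  ultimately show ?case by simp
next
  case (FOr p q)
  have "fo_sat X rho p s = fo_sat Y sigma p t" by (rule FOr.IH(1)) (use FOr.prems in auto)
  moreover have "fo_sat X rho q s = fo_sat Y sigma q t" by (rule FOr.IH(2)) (use FOr.prems in auto)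
  ultimately show ?case by simp
next
  case (FEx v p)
  let ?W = "V - {v}"
  have fW: "finite ?W" using FEx.prems by simp
  have vW: "v \<notin> ?W" by simp
  have agW: "agree rho sigma N ?W s t" using agree_mono[OF FEx.prems(5)] by blast
  have cW: "card ?W < N" using FEx.prems card_Diff1_le[of V v] by simp
  have cV': "qr p + card (insert v ?W) \<le> N" using FEx.prems card_Diff1_le[of V v] card_insert_le_m1 fW
    by (simp add: card_insert_if)
  have fv': "fo_fv p \<subseteq> insert v ?W" using FEx.prems by auto
  have fV': "finite (insert v ?W)" using fW by simp
  show ?case
  proof
    assume "fo_sat X rho (FEx v p) s"
    then obtain a where aX: "a \<in> X" and sa: "fo_sat X rho p (s(v:=a))" by auto
    obtain b where bY: "b \<in> Y" and g: "agree rho sigma N (insert v ?W) (s(v:=a)) (t(v:=b))"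
      using forth[OF nX nY fW FEx.prems(3,4) agW cW aX vW] by blast
    have "fo_sat Y sigma p (t(v:=b))"
      using FEx.IH[OF fV' fv' upd_range[OF FEx.prems(3) aX] upd_range[OF FEx.prems(4) bY] g cV'] sa by blast
    thus "fo_sat Y sigma (FEx v p) t" using bY by auto
  next
    assume "fo_sat Y sigma (FEx v p) t"
    then obtain b where bY: "b \<in> Y" and sb: "fo_sat Y sigma p (t(v:=b))" by auto
    obtain a where aX: "a \<in> X" and g: "agree sigma rho N (insert v ?W) (t(v:=b)) (s(v:=a))"
      using forth[OF nY nX fW FEx.prems(4,3) agree_sym[OF agW] cW bY vW] by blast
    have "fo_sat X rho p (s(v:=a))"
      using FEx.IH[OF fV' fv' upd_range[OF FEx.prems(3) aX] upd_range[OF FEx.prems(4) bY] agree_sym[OF g] cV'] sb by blast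
    thus "fo_sat X rho (FEx v p) s" using aX by auto
  qed
next
  case (FAll v p)
  let ?W = "V - {v}"
  have fW: "finite ?W" using FAll.prems by simp
  have vW: "v \<notin> ?W" by simp
  have agW: "agree rho sigma N ?W s t" using agree_mono[OF FAll.prems(5)] by blast
  have cW: "card ?W < N" using FAll.prems card_Diff1_le[of V v] by simp
  have cV': "qr p + card (insert v ?W) \<le> N" using FAll.prems card_Diff1_le[of V v] fW
    by (simp add: card_insert_if)
  have fv': "fo_fv p \<subseteq> insert v ?W" using FAll.prems by auto
  have fV': "finite (insert v ?W)" using fW by simp
  show ?case
  proof
    assume h: "fo_sat X rho (FAll v p) s"
    show "fo_sat Y sigma (FAll v p) t"
    proof (simp, intro ballI)
      fix b assume bY: "b \<in> Y"
      obtain a where aX: "a \<in> X" and g: "agree sigma rho N (insert v ?W) (t(v:=b)) (s(v:=a))"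
        using forth[OF nY nX fW FAll.prems(4,3) agree_sym[OF agW] cW bY vW] by blast
      have sa: "fo_sat X rho p (s(v:=a))" using h aX by simp
      show "fo_sat Y sigma p (t(v:=b))"
        using FAll.IH[OF fV' fv' upd_range[OF FAll.prems(3) aX] upd_range[OF FAll.prems(4) bY] agree_sym[OF g] cV'] sa by blast
    qed
  next
    assume h: "fo_sat Y sigma (FAll v p) t"
    show "fo_sat X rho (FAll v p) s"
    proof (simp, intro ballI)
      fix a assume aX: "a \<in> X"
      obtain b where bY: "b \<in> Y" and g: "agree rho sigma N (insert v ?W) (s(v:=a)) (t(v:=b))"
        using forth[OF nX nY fW FAll.prems(3,4) agW cW aX vW] by blast
      have sb: "fo_sat Y sigma p (t(v:=b))" using h bY by simp
      show "fo_sat X rho p (s(v:=a))"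
        using FAll.IH[OF fV' fv' upd_range[OF FAll.prems(3) aX] upd_range[OF FAll.prems(4) bY] g cV'] sb by blast
    qed
  qed
qed

lemma elem_equiv_nice:
  assumes nX: "nice X rho" and nY: "nice Y sigma" and XX: "X \<noteq> {}" and YY: "Y \<noteq> {}"
  shows "elem_equiv X rho Y sigma"
  unfolding elem_equiv_def
proof (intro allI impI)
  fix p assume fv: "fo_fv p = {}"
  obtain x0 where x0: "x0 \<in> X" using XX by blast
  obtain y0 where y0: "y0 \<in> Y" using YY by blast
  have ag0: "agree r r' n {} s t" for r r' n s t unfolding agree_def by simp
  show "fo_models X rho p \<longleftrightarrow> fo_models Y sigma p"
  proof
    assume h: "fo_models X rho p"
    show "fo_models Y sigma p" unfolding fo_models_def
    proof (intro allI impI)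
      fix t :: "nat \<Rightarrow> 'b" assume t: "range t \<subseteq> Y"
      have "fo_sat X rho p (\<lambda>_. x0)" using h x0 unfolding fo_models_def by auto
      thus "fo_sat Y sigma p t"
        using fo_transfer[OF nX nY, of "{}" p "\<lambda>_. x0" t "qr p"] fv t x0 ag0[of rho sigma "qr p" "\<lambda>_. x0" t] by auto
    qed
  next
    assume h: "fo_models Y sigma p"
    show "fo_models X rho p" unfolding fo_models_def
    proof (intro allI impI)
      fix s :: "nat \<Rightarrow> 'a" assume s: "range s \<subseteq> X"
      have "fo_sat Y sigma p (\<lambda>_. y0)" using h y0 unfolding fo_models_def by auto
      thus "fo_sat X rho p s"
        using fo_transfer[OF nX nY, of "{}" p s "\<lambda>_. y0" "qr p"] fv s y0 ag0[of rho sigma "qr p" s "\<lambda>_. y0"] by auto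
    qed
  qed
qed

primrec cB :: "nat \<Rightarrow> nat \<Rightarrow> nat \<Rightarrow> nat inf" where
  "cB x 0 k = IConj {} (\<lambda>_. IEq 0 0)"
| "cB x (Suc m) k = IEx (k+2) (IConj {0,1,2} (\<lambda>i. if i = 0 then IRel x (k+2)
      else if i = 1 then IConj {..<k} (\<lambda>j. INeg (IEq (j+2) (k+2))) else cB x m (Suc k)))"

lemma cB_fv: "inf_fv (cB x m k) \<subseteq> insert x {2..<k+2}"
proof (induction m arbitrary: k)
  case 0
  then show ?case by simp
next
  case (Suc m)
  have "inf_fv (cB x m (Suc k)) \<subseteq> insert x {2..<Suc k+2}" using Suc.IH[of "Suc k"] .
  thus ?case by (auto simp: atLeastLessThan_iff)
qed

lemma cB_sat:
  assumes eq: "equiv X rho" and x: "x < 2"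
  shows "range s \<subseteq> X \<Longrightarrow> inf_sat X rho (cB x m k) s \<longleftrightarrow>
    (\<exists>F. F \<subseteq> rho``{s x} - s ` {2..<k+2} \<and> finite F \<and> card F = m)"
proof (induction m arbitrary: k s)
  case 0
  then show ?case by auto
next
  case (Suc m)
  have cX: "rho``{s x} \<subseteq> X" using eq unfolding equiv_def refl_on_def by blast
  have img: "\<And>a. (s(k+2:=a)) ` {2..<Suc k+2} = insert a (s ` {2..<k+2})"
    by (auto simp: image_iff atLeastLessThan_iff)
  have xk: "(s(k+2:=a)) x = s x" for a using x by simp
  have IH: "\<And>a. a \<in> X \<Longrightarrow> inf_sat X rho (cB x m (Suc k)) (s(k+2:=a)) \<longleftrightarrow>
    (\<exists>F. F \<subseteq> rho``{s x} - insert a (s ` {2..<k+2}) \<and> finite F \<and> card F = m)"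
  proof -
    fix a assume "a \<in> X"
    hence "range (s(k+2:=a)) \<subseteq> X" using Suc.prems by auto
    from Suc.IH[OF this, of "Suc k"] show "?thesis a" unfolding img xk .
  qed
  have dist: "\<And>a. (\<forall>j\<in>{..<k}. \<not> (s(k+2:=a)) (j+2) = (s(k+2:=a)) (k+2)) \<longleftrightarrow> a \<notin> s ` {2..<k+2}"
  proof -
    fix a
    have "s ` {2..<k+2} = (\<lambda>j. s (j+2)) ` {..<k}"
    proof -
      have "{2..<k+2} = (\<lambda>j. j+2) ` {..<k}"
      proof (rule set_eqI)
        fix y show "y \<in> {2..<k+2} \<longleftrightarrow> y \<in> (\<lambda>j. j+2) ` {..<k}"
        proof
          assume "y \<in> {2..<k+2}" thus "y \<in> (\<lambda>j. j+2) ` {..<k}" by (intro image_eqI[where x="y-2"]) auto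
        qed auto
      qed
      thus ?thesis by (simp add: image_image)
    qed
    thus "?thesis a" by auto
  qed
  have "inf_sat X rho (cB x (Suc m) k) s \<longleftrightarrow>
    (\<exists>a\<in>X. (s x, a) \<in> rho \<and> a \<notin> s ` {2..<k+2} \<and> inf_sat X rho (cB x m (Suc k)) (s(k+2:=a)))"
    using x dist by (simp add: xk)
  also have "\<dots> \<longleftrightarrow> (\<exists>F. F \<subseteq> rho``{s x} - s ` {2..<k+2} \<and> finite F \<and> card F = Suc m)"
  proof
    assume "\<exists>a\<in>X. (s x, a) \<in> rho \<and> a \<notin> s ` {2..<k+2} \<and> inf_sat X rho (cB x m (Suc k)) (s(k+2:=a))"
    then obtain a F where a: "a \<in> X" "(s x, a) \<in> rho" "a \<notin> s ` {2..<k+2}"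
      and F: "F \<subseteq> rho``{s x} - insert a (s ` {2..<k+2})" "finite F" "card F = m" using IH by blast
    have "a \<notin> F" using F(1) by blast
    have "insert a F \<subseteq> rho``{s x} - s ` {2..<k+2}" using a F by auto
    moreover have "card (insert a F) = Suc m" using F(2,3) \<open>a \<notin> F\<close> by simp
    ultimately show "\<exists>F. F \<subseteq> rho``{s x} - s ` {2..<k+2} \<and> finite F \<and> card F = Suc m" using F(2)
      by (meson finite_insert)
  next
    assume "\<exists>F. F \<subseteq> rho``{s x} - s ` {2..<k+2} \<and> finite F \<and> card F = Suc m"
    then obtain F where F: "F \<subseteq> rho``{s x} - s ` {2..<k+2}" "finite F" "card F = Suc m" by blast
    then obtain a where aF: "a \<in> F" by fastforce
    have a: "a \<in> X" "(s x, a) \<in> rho" "a \<notin> s ` {2..<k+2}" using aF F cX by auto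
    have "F - {a} \<subseteq> rho``{s x} - insert a (s ` {2..<k+2})" "finite (F - {a})" "card (F - {a}) = m"
      using F aF by auto
    hence "inf_sat X rho (cB x m (Suc k)) (s(k+2:=a))" using IH[OF a(1)] by blast
    thus "\<exists>a\<in>X. (s x, a) \<in> rho \<and> a \<notin> s ` {2..<k+2} \<and> inf_sat X rho (cB x m (Suc k)) (s(k+2:=a))"
      using a by blast
  qed
  finally show ?case .
qed

definition cInf :: "nat \<Rightarrow> nat inf" where
  "cInf x = IConj UNIV (\<lambda>m. cB x m 0)"

lemma cInf_sat:
  assumes eq: "equiv X rho" and x: "x < 2" and s: "range s \<subseteq> X"
  shows "inf_sat X rho (cInf x) s \<longleftrightarrow> infinite (rho``{s x})"
proof -
  have "inf_sat X rho (cInf x) s \<longleftrightarrow> (\<forall>m. \<exists>F. F \<subseteq> rho``{s x} \<and> finite F \<and> card F = m)"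
    unfolding cInf_def using cB_sat[OF eq x s] by simp
  also have "\<dots> \<longleftrightarrow> infinite (rho``{s x})"
  proof
    assume h: "\<forall>m. \<exists>F. F \<subseteq> rho``{s x} \<and> finite F \<and> card F = m"
    show "infinite (rho``{s x})"
    proof
      assume f: "finite (rho``{s x})"
      obtain F where F: "F \<subseteq> rho``{s x}" "card F = Suc (card (rho``{s x}))"
        using spec[OF h, of "Suc (card (rho``{s x}))"] by (elim exE conjE) simp
      show False using card_mono[OF f F(1)] F(2) by simp
    qed
  next
    assume i: "infinite (rho``{s x})"
    show "\<forall>m. \<exists>F. F \<subseteq> rho``{s x} \<and> finite F \<and> card F = m"
    proof
      fix m
      obtain B where "finite B" "card B = m" "B \<subseteq> rho``{s x}" using infinite_arbitrarily_large[OF i, of m] by (elim exE conjE)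
      thus "\<exists>F. F \<subseteq> rho``{s x} \<and> finite F \<and> card F = m" by blast
    qed
  qed
  finally show ?thesis .
qed

lemma cInf_fv: "x < 2 \<Longrightarrow> inf_fv (cInf x) \<subseteq> {0,1}"
  unfolding cInf_def using cB_fv[of x _ 0] by fastforce

definition phi :: "nat inf" where
  "phi = IEx 0 (IEx 1 (IConj {0,1,2} (\<lambda>i. if i = 0 then INeg (IRel 0 1) else if i = 1 then cInf 0 else cInf 1)))"

lemma phi_fv: "inf_fv phi = {}"
  using cInf_fv[of 0] cInf_fv[of 1] unfolding phi_def by auto

lemma phi_sat:
  assumes eq: "equiv X rho" and s: "range s \<subseteq> X"
  shows "inf_sat X rho phi s \<longleftrightarrow> (\<exists>a\<in>X. \<exists>b\<in>X. (a,b) \<notin> rho \<and> infinite (rho``{a}) \<and> infinite (rho``{b}))"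
proof -
  have r: "\<And>a b. a \<in> X \<Longrightarrow> b \<in> X \<Longrightarrow> range (s(0:=a, 1:=b)) \<subseteq> X" using s by auto
  have "inf_sat X rho phi s \<longleftrightarrow> (\<exists>a\<in>X. \<exists>b\<in>X. (a,b)\<notin>rho \<and> inf_sat X rho (cInf 0) (s(0:=a,1:=b))
     \<and> inf_sat X rho (cInf 1) (s(0:=a,1:=b)))" unfolding phi_def by simp
  also have "\<dots> \<longleftrightarrow> (\<exists>a\<in>X. \<exists>b\<in>X. (a,b) \<notin> rho \<and> infinite (rho``{a}) \<and> infinite (rho``{b}))"
  proof (intro bex_cong refl)
    fix a b assume "a \<in> X" "b \<in> X"
    thus "((a,b)\<notin>rho \<and> inf_sat X rho (cInf 0) (s(0:=a,1:=b)) \<and> inf_sat X rho (cInf 1) (s(0:=a,1:=b))) =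
      ((a,b) \<notin> rho \<and> infinite (rho``{a}) \<and> infinite (rho``{b}))"
      using cInf_sat[OF eq _ r[of a b], of 0] cInf_sat[OF eq _ r[of a b], of 1] by simp
  qed
  finally show ?thesis .
qed

lemma class_of: "equiv A r \<Longrightarrow> C \<in> A//r \<Longrightarrow> x \<in> C \<Longrightarrow> r``{x} = C"
  by (metis equiv_class_eq_iff quotientE Image_singleton_iff equiv_class_eq)

lemma singl_inf:
  assumes eq: "equiv A r" and inf: "infinite {C\<in>A//r. card C = 1}"
  shows "infinite (singl A r)"
proof
  assume f: "finite (singl A r)"
  have "{C\<in>A//r. card C = 1} \<subseteq> (\<lambda>a. {a}) ` singl A r"
  proof
    fix C assume C: "C \<in> {C\<in>A//r. card C = 1}"
    then obtain a where a: "C = {a}" using card_1_singletonE by blast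
    have "a \<in> A" using C a in_quotient_imp_subset[OF eq] by blast
    moreover have "r``{a} = {a}" using class_of[OF eq, of C a] C a by simp
    ultimately show "C \<in> (\<lambda>a. {a}) ` singl A r" unfolding singl_def using a by blast
  qed
  moreover have "finite ((\<lambda>a. {a}) ` singl A r)" using f by simp
  ultimately have "finite {C\<in>A//r. card C = 1}" by (rule finite_subset)
  thus False using inf by contradiction
qed

lemma rest_countable:
  assumes eq: "equiv X rho" and c1: "countable {C \<in> X // rho. card C = 1}"
    and u: "\<forall>n\<ge>2. \<exists>!C. C \<in> X // rho \<and> finite C \<and> card C = n"
    and X': "{C \<in> X // rho. infinite C} = {X'}"
  shows "countable (X - X')"
proof -
  let ?F = "{C \<in> X // rho. finite C}"
  have "?F \<subseteq> {C \<in> X // rho. card C = 1} \<union> {C \<in> X // rho. finite C \<and> card C \<ge> 2}"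
  proof
    fix C assume C: "C \<in> ?F"
    hence "C \<noteq> {}" using in_quotient_imp_non_empty[OF eq] by blast
    hence "card C \<noteq> 0" using C by simp
    thus "C \<in> {C \<in> X // rho. card C = 1} \<union> {C \<in> X // rho. finite C \<and> card C \<ge> 2}" using C by auto
  qed
  moreover have "countable {C \<in> X // rho. finite C \<and> card C \<ge> 2}"
  proof (rule countableI[of card])
    show "inj_on card {C \<in> X // rho. finite C \<and> card C \<ge> 2}"
    proof (rule inj_onI)
      fix C D assume C: "C \<in> {C \<in> X // rho. finite C \<and> card C \<ge> 2}" and D: "D \<in> {C \<in> X // rho. finite C \<and> card C \<ge> 2}"
        and cd: "card C = card D"
      have "\<exists>!E. E \<in> X // rho \<and> finite E \<and> card E = card C" using u C by simp
      thus "C = D" using C D cd by (elim ex1E) auto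
    qed
  qed
  hence "countable ({C \<in> X // rho. card C = 1} \<union> {C \<in> X // rho. finite C \<and> card C \<ge> 2})"
    using c1 by (intro countable_Un)
  ultimately have cF: "countable ?F" by (rule countable_subset)
  have "X - X' \<subseteq> (\<Union>C\<in>?F. C)"
  proof
    fix x assume x: "x \<in> X - X'"
    have xX: "x \<in> X" using x by simp
    have Cq: "rho``{x} \<in> X // rho" by (rule quotientI[OF xX])
    have xC: "x \<in> rho``{x}" by (rule equiv_class_self[OF eq xX])
    have "finite (rho``{x})"
    proof (rule ccontr)
      assume "infinite (rho``{x})"
      hence "rho``{x} \<in> {C \<in> X // rho. infinite C}" using Cq by simp
      hence "rho``{x} = X'" unfolding X' by simp
      thus False using xC x by simp
    qed
    hence "rho``{x} \<in> ?F" using Cq by simp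
    thus "x \<in> (\<Union>C\<in>?F. C)" using xC by (rule UN_I)
  qed
  moreover have "countable (\<Union>C\<in>?F. C)" using cF by (rule countable_UN) (simp add: countable_finite)
  ultimately show ?thesis by (rule countable_subset)
qed

lemma no_cond:
  assumes eX: "equiv X rho" and eY: "equiv Y sigma"
    and cX: "countable (X - X')" and X'q: "X' \<in> X // rho" and iX': "infinite X'"
    and Y'q: "Y' \<in> Y // sigma" "Y'' \<in> Y // sigma" and ne: "Y' \<noteq> Y''"
    and Yinf: "\<And>D. D \<in> Y // sigma \<Longrightarrow> infinite D \<Longrightarrow> D = Y' \<or> D = Y''"
    and unc: "\<not> countable Y'" "\<not> countable Y''"
  shows "\<not> condensation X rho Y sigma F"
proof
  assume c: "condensation X rho Y sigma F"
  hence bij: "bij_betw F X Y" and hom: "\<And>x x'. x \<in> X \<Longrightarrow> x' \<in> X \<Longrightarrow> (x,x') \<in> rho \<Longrightarrow> (F x, F x') \<in> sigma"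
    unfolding condensation_def by auto
  have X'X: "X' \<subseteq> X" using in_quotient_imp_subset[OF eX X'q] .
  obtain x0 where x0: "x0 \<in> X'" using iX' by (metis finite.emptyI ex_in_conv)
  have x0X: "x0 \<in> X" using x0 X'X by blast
  let ?D = "sigma``{F x0}"
  have Dq: "?D \<in> Y // sigma" using bij x0X quotientI bij_betwE by metis
  have sub: "F ` X' \<subseteq> ?D"
  proof
    fix y assume "y \<in> F ` X'"
    then obtain x where x: "x \<in> X'" "y = F x" by blast
    have "(x0, x) \<in> rho" using class_of[OF eX X'q x0] x by blast
    thus "y \<in> ?D" using hom[OF x0X] x X'X by blast
  qed
  have "inj_on F X'" using bij X'X bij_betw_def inj_on_subset by metis
  hence "infinite (F ` X')" using iX' finite_imageD by blast
  hence "infinite ?D" using sub finite_subset by blast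
  hence D: "?D = Y' \<or> ?D = Y''" using Yinf Dq by blast
  have "\<exists>E. E \<in> Y // sigma \<and> E \<noteq> ?D \<and> \<not> countable E"
  proof (cases "?D = Y'")
    case True
    thus ?thesis using ne Y'q(2) unc(2) by auto
  next
    case False
    thus ?thesis using Y'q(1) unc(1) by auto
  qed
  then obtain E where E: "E \<in> Y // sigma" "E \<noteq> ?D" "\<not> countable E" by blast
  have disj: "E \<inter> ?D = {}" using quotient_disj[OF eY E(1) Dq] E(2) by blast
  have "E \<subseteq> F ` (X - X')"
  proof
    fix y assume y: "y \<in> E"
    hence "y \<in> Y" using in_quotient_imp_subset[OF eY E(1)] by blast
    then obtain x where x: "x \<in> X" "y = F x" using bij unfolding bij_betw_def by blast
    have "x \<notin> X'" using sub disj x y by blast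
    thus "y \<in> F ` (X - X')" using x by blast
  qed
  moreover have "countable (F ` (X - X'))" using cX by (rule countable_image)
  ultimately have "countable E" by (rule countable_subset)
  thus False using E(3) by blast
qed

lemma pos_models:
  fixes p :: "'i inf"
  assumes eX: "equiv X rho" and eY: "equiv Y sigma" and iS: "infinite (singl X rho)"
    and Y'Y: "Y' \<subseteq> Y" and infY': "infinite Y'" and relY': "\<forall>y\<in>Y'. \<forall>y'\<in>Y'. (y, y') \<in> sigma"
    and XX: "x0 \<in> X" and pp: "positive p" and fv: "inf_fv p = {}" and m: "inf_models X rho p"
  shows "inf_models Y sigma p"
  unfolding inf_models_def
proof (intro allI impI)
  fix t :: "nat \<Rightarrow> 'b" assume t: "range t \<subseteq> Y"
  have s: "range (\<lambda>_::nat. x0) \<subseteq> X" using XX by auto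
  have sat: "inf_sat X rho p (\<lambda>_. x0)" using m s unfolding inf_models_def by blast
  have g: "pgood rho sigma (singl X rho) Y' {} (\<lambda>_. x0) t" unfolding pgood_def by simp
  show "inf_sat Y sigma p t"
    using pos_transfer[OF eX eY refl iS Y'Y infY' relY' pp _ _ s t g sat] fv by simp
qed

theorem mainTheorem16:
  fixes X :: "'a set" and rho :: "('a \<times> 'a) set"
    and Y :: "'b set" and sigma :: "('b \<times> 'b) set"
  assumes "has_size_omega1 X" and "has_size_omega1 Y"
    and "equiv X rho" and "equiv Y sigma"
    and "countable {C \<in> X // rho. card C = 1}" and "infinite {C \<in> X // rho. card C = 1}"
    and "countable {C \<in> Y // sigma. card C = 1}" and "infinite {C \<in> Y // sigma. card C = 1}"
    and "\<forall>n\<ge>2. \<exists>!C. C \<in> X // rho \<and> finite C \<and> card C = n"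
    and "\<forall>n\<ge>2. \<exists>!C. C \<in> Y // sigma \<and> finite C \<and> card C = n"
    and "\<exists>X'. {C \<in> X // rho. infinite C} = {X'} \<and> has_size_omega1 X'"
    and "\<exists>Y' Y''. Y' \<noteq> Y'' \<and> {C \<in> Y // sigma. infinite C} = {Y', Y''}
            \<and> has_size_omega1 Y' \<and> has_size_omega1 Y''"
  shows "elem_equiv X rho Y sigma
    \<and> pos_equiv TYPE('i) X rho Y sigma
    \<and> \<not> cond_equiv X rho Y sigma
    \<and> \<not> inf_equiv TYPE(nat) X rho Y sigma"
proof -
  note eX = assms(3) and eY = assms(4)
  obtain X' where X'1: "{C \<in> X // rho. infinite C} = {X'}" and X'2: "has_size_omega1 X'" using assms(11) by blast
  obtain Y' Y'' where ne: "Y' \<noteq> Y''" and Y1: "{C \<in> Y // sigma. infinite C} = {Y', Y''}"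
    and Y'2: "has_size_omega1 Y'" and Y''2: "has_size_omega1 Y''" using assms(12) by blast
  have X'q: "X' \<in> X // rho" "infinite X'"
  proof -
    have "X' \<in> {C \<in> X // rho. infinite C}" using X'1 by simp
    thus "X' \<in> X // rho" "infinite X'" by simp_all
  qed
  have Y'q: "Y' \<in> Y // sigma" "infinite Y'" "Y'' \<in> Y // sigma" "infinite Y''"
  proof -
    have "Y' \<in> {C \<in> Y // sigma. infinite C}" "Y'' \<in> {C \<in> Y // sigma. infinite C}" using Y1 by simp_all
    thus "Y' \<in> Y // sigma" "infinite Y'" "Y'' \<in> Y // sigma" "infinite Y''" by simp_all
  qed
  have X'X: "X' \<subseteq> X" using in_quotient_imp_subset[OF eX X'q(1)] .
  have Y'Y: "Y' \<subseteq> Y" "Y'' \<subseteq> Y" using in_quotient_imp_subset[OF eY Y'q(1)] in_quotient_imp_subset[OF eY Y'q(3)] by simp_all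
  obtain x0 where x0: "x0 \<in> X'" using X'q(2) by (metis finite.emptyI ex_in_conv)
  obtain y0 where y0: "y0 \<in> Y'" using Y'q(2) by (metis finite.emptyI ex_in_conv)
  obtain y1 where y1: "y1 \<in> Y''" using Y'q(4) by (metis finite.emptyI ex_in_conv)
  have x0X: "x0 \<in> X" using x0 X'X by blast
  have y0Y: "y0 \<in> Y" using y0 Y'Y by blast
  have iSX: "infinite (singl X rho)" by (rule singl_inf[OF eX assms(6)])
  have iSY: "infinite (singl Y sigma)" by (rule singl_inf[OF eY assms(8)])
  have nX: "nice X rho" unfolding nice_def using eX iSX assms(9) by blast
  have nY: "nice Y sigma" unfolding nice_def using eY iSY assms(10) by blast
  have relX': "\<forall>y\<in>X'. \<forall>y'\<in>X'. (y, y') \<in> rho"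
  proof (intro ballI)
    fix y y' assume "y \<in> X'" "y' \<in> X'"
    thus "(y, y') \<in> rho" using class_of[OF eX X'q(1), of y] by blast
  qed
  have relY': "\<forall>y\<in>Y'. \<forall>y'\<in>Y'. (y, y') \<in> sigma"
  proof (intro ballI)
    fix y y' assume "y \<in> Y'" "y' \<in> Y'"
    thus "(y, y') \<in> sigma" using class_of[OF eY Y'q(1), of y] by blast
  qed
  have E1: "elem_equiv X rho Y sigma"
    by (rule elem_equiv_nice[OF nX nY]) (use x0X y0Y in blast)+
  have E2: "pos_equiv TYPE('i) X rho Y sigma"
    unfolding pos_equiv_def
  proof (intro allI impI)
    fix p :: "'i inf" assume fv: "inf_fv p = {}" and pp: "positive p"
    show "inf_models X rho p = inf_models Y sigma p"
    proof
      assume "inf_models X rho p"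
      thus "inf_models Y sigma p"
        by (rule pos_models[OF eX eY iSX Y'Y(1) Y'q(2) relY' x0X pp fv])
    next
      assume "inf_models Y sigma p"
      thus "inf_models X rho p"
        by (rule pos_models[OF eY eX iSY X'X X'q(2) relX' y0Y pp fv])
    qed
  qed
  have E3: "\<not> cond_equiv X rho Y sigma"
  proof -
    have cX: "countable (X - X')" by (rule rest_countable[OF eX assms(5) assms(9) X'1])
    have Yinf: "\<And>D. D \<in> Y // sigma \<Longrightarrow> infinite D \<Longrightarrow> D = Y' \<or> D = Y''"
    proof -
      fix D assume "D \<in> Y // sigma" "infinite D"
      hence "D \<in> {C \<in> Y // sigma. infinite C}" by simp
      thus "D = Y' \<or> D = Y''" unfolding Y1 by simp
    qed
    have "\<And>F. \<not> condensation X rho Y sigma F"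
      by (rule no_cond[OF eX eY cX X'q(1) X'q(2) Y'q(1) Y'q(3) ne Yinf])
        (use omega1_uncountable Y'2 Y''2 in blast)+
    thus ?thesis unfolding cond_equiv_def by blast
  qed
  have E4: "\<not> inf_equiv TYPE(nat) X rho Y sigma"
  proof
    assume h: "inf_equiv TYPE(nat) X rho Y sigma"
    have "inf_models Y sigma phi"
      unfolding inf_models_def
    proof (intro allI impI)
      fix t :: "nat \<Rightarrow> 'b" assume t: "range t \<subseteq> Y"
      have c0: "sigma``{y0} = Y'" by (rule class_of[OF eY Y'q(1) y0])
      have c1: "sigma``{y1} = Y''" by (rule class_of[OF eY Y'q(3) y1])
      have "(y0, y1) \<notin> sigma"
      proof
        assume "(y0, y1) \<in> sigma"
        hence "y1 \<in> Y'" using c0 by blast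
        moreover have "Y' \<inter> Y'' = {}" using quotient_disj[OF eY Y'q(1) Y'q(3)] ne by blast
        ultimately show False using y1 by blast
      qed
      moreover have "y1 \<in> Y" using y1 Y'Y by blast
      ultimately show "inf_sat Y sigma phi t"
        unfolding phi_sat[OF eY t] using y0Y c0 c1 Y'q(2,4) by blast
    qed
    moreover have "\<not> inf_models X rho phi"
    proof
      assume "inf_models X rho phi"
      moreover have s: "range (\<lambda>_::nat. x0) \<subseteq> X" using x0X by auto
      ultimately have "inf_sat X rho phi (\<lambda>_. x0)" unfolding inf_models_def by blast
      then obtain a b where ab: "a \<in> X" "b \<in> X" "(a,b) \<notin> rho" "infinite (rho``{a})" "infinite (rho``{b})"
        unfolding phi_sat[OF eX s] by blast
      have "rho``{a} \<in> {C \<in> X // rho. infinite C}" using ab quotientI by simp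
      hence "rho``{a} = X'" unfolding X'1 by simp
      moreover have "rho``{b} \<in> {C \<in> X // rho. infinite C}" using ab quotientI by simp
      hence "rho``{b} = X'" unfolding X'1 by simp
      moreover have "b \<in> rho``{b}" by (rule equiv_class_self[OF eX ab(2)])
      ultimately have "b \<in> rho``{a}" by simp
      hence "(a,b) \<in> rho" by simp
      thus False using ab(3) by simp
    qed
    ultimately show False using h phi_fv unfolding inf_equiv_def by blast
  qed
  show ?thesis using E1 E2 E3 E4 by blast
qed

end
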